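(* Run GBPA with the stochastically smoothed potential whose perturbation is $\eta Z$, where $Z$ is uniformly distributed on $[0,1]$ and $\eta = (NT)^{2/3}$. Then for every sequence of gain vectors $g_1,\dots,g_T\in[-1,0]^N$ the expected regret is at most $3(NT)^{2/3}$.
   Context: Adversarial multi-armed bandit: there are $N$ arms and $T$ rounds; an oblivious adversary fixes gain vectors $g_1,\dots,g_T \in [-1,0]^N$ in advance. For a random variable $W$ with a continuous distribution on $\mathbb{R}$ and finite expectation, the stochastically smoothed potential is $\tilde\Phi(G) = \mathbb{E}[\max_{i}(G_i + W_i)]$ for $G\in\mathbb{R}^N$, where $W_1,\dots,W_N$ are i.i.d. copies of $W$; it is convex and differentiable with $\nabla_i\tilde\Phi(G) = \mathbb{P}(i = \arg\max_j (G_j+W_j))$, so $\nabla\tilde\Phi(G)$ lies in the probability simplex (some coordinates may be $0$). "Perturbation $\eta Z$" means $W=\eta Z$. The algorithm GBPA$(\tilde\Phi)$: set $\hat G_0 = 0$; for $t=1,\dots,T$: let $p_t = \nabla\tilde\Phi(\hat G_{t-1})$, draw arm $i_t \sim p_t$, observe only $g_{t,i_t}$, set $\hat g_t = \frac{g_{t,i_t}}{p_{t,i_t}} e_{i_t}$ and $\hat G_t = \hat G_{t-1} + \hat g_t$. The expected regret is $\mathbb{E}\big[\max_{i}\sum_{t=1}^T (g_{t,i} - g_{t,i_t})\big]$ over the learner's random choices. *)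

theory Defs
  imports "HOL-Probability.Probability"
begin

text \<open>Arms are 0,...,N-1, rounds are 0,...,T-1. Gains: g t i.
  Perturbation vector: Z_0,...,Z_{N-1} i.i.d. uniform on [0,1], scaled by eta.\<close>

definition pert :: "nat \<Rightarrow> (nat \<Rightarrow> real) measure" where
  "pert N = PiM {..<N} (\<lambda>_. uniform_measure lborel {0..1::real})"

definition smoothed_potential :: "nat \<Rightarrow> real \<Rightarrow> (nat \<Rightarrow> real) \<Rightarrow> real" where
  "smoothed_potential N \<eta> G = (\<integral>z. (MAX i\<in>{..<N}. G i + \<eta> * z i) \<partial>pert N)"

text \<open>Gradient of the smoothed potential, coordinate i:
  P(i = argmax_j (G_j + eta Z_j)) (ties have probability zero).\<close>
definition grad_prob :: "nat \<Rightarrow> real \<Rightarrow> (nat \<Rightarrow> real) \<Rightarrow> nat \<Rightarrow> real" where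
  "grad_prob N \<eta> G i =
     measure (pert N) {z \<in> space (pert N). \<forall>j<N. j \<noteq> i \<longrightarrow> G j + \<eta> * z j < G i + \<eta> * z i}"

text \<open>Cumulative gain estimate hat G_t from a history of chosen arms,
  stored most-recent-first: history (i # hs) means arm i was chosen in round length hs.\<close>
fun est :: "nat \<Rightarrow> real \<Rightarrow> (nat \<Rightarrow> nat \<Rightarrow> real) \<Rightarrow> nat list \<Rightarrow> nat \<Rightarrow> real" where
  "est N \<eta> g [] = (\<lambda>_. 0)"
| "est N \<eta> g (i # hs) =
     (let G = est N \<eta> g hs
      in G(i := G i + g (length hs) i / grad_prob N \<eta> G i))"

definition arm_pmf :: "nat \<Rightarrow> real \<Rightarrow> (nat \<Rightarrow> real) \<Rightarrow> nat pmf" where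
  "arm_pmf N \<eta> G = embed_pmf (\<lambda>i. if i < N then grad_prob N \<eta> G i else 0)"

fun hist :: "nat \<Rightarrow> real \<Rightarrow> (nat \<Rightarrow> nat \<Rightarrow> real) \<Rightarrow> nat \<Rightarrow> nat list pmf" where
  "hist N \<eta> g 0 = return_pmf []"
| "hist N \<eta> g (Suc t) =
     bind_pmf (hist N \<eta> g t) (\<lambda>hs. map_pmf (\<lambda>i. i # hs) (arm_pmf N \<eta> (est N \<eta> g hs)))"

definition expected_regret :: "nat \<Rightarrow> nat \<Rightarrow> real \<Rightarrow> (nat \<Rightarrow> nat \<Rightarrow> real) \<Rightarrow> real" where
  "expected_regret N T \<eta> g =
     measure_pmf.expectation (hist N \<eta> g T)
       (\<lambda>hs. (MAX i\<in>{..<N}. \<Sum>t<T. g t i) - (\<Sum>t<T. g t (rev hs ! t)))"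

end

theory Submission
  imports Defs
begin


abbreviation UU :: "real measure" where "UU \<equiv> uniform_measure lborel {0..1::real}"

lemma prob_UU: "prob_space UU"
  by (rule prob_space_uniform_measure) auto

interpretation UP: product_prob_space "\<lambda>_::nat. UU" UNIV
  by (simp add: product_prob_space_def product_prob_space_axioms_def product_sigma_finite_def
      prob_UU prob_space_imp_sigma_finite)

lemma prob_pert: "prob_space (pert N)"
  unfolding pert_def by (rule prob_space_PiM) (simp add: prob_UU)

lemma sets_pert: "sets (pert N) = sets (PiM {..<N} (\<lambda>_. UU))" by (simp add: pert_def)

lemma fiber_bound:
  assumes i: "i < N"
    and A: "{z \<in> space (pert N). P z (z i)} \<in> sets (pert N)"
    and indep: "\<And>z w. P (z(i:=w)) = P z"
    and bound: "\<And>z. emeasure UU {y. P z y} \<le> \<delta>"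
  shows "emeasure (pert N) {z \<in> space (pert N). P z (z i)} \<le> \<delta>"
proof -
  define I where "I = {..<N} - {i}"
  have ins: "insert i I = {..<N}" using i by (auto simp: I_def)
  have fI: "finite I" "i \<notin> I" by (auto simp: I_def)
  define S where "S = {z \<in> space (pert N). P z (z i)}"
  have pN: "pert N = PiM (insert i I) (\<lambda>_. UU)" by (simp add: pert_def ins)
  have Sm: "S \<in> sets (PiM (insert i I) (\<lambda>_. UU))" using A pN by (simp add: S_def)
  have "emeasure (pert N) S = (\<integral>\<^sup>+ z. indicator S z \<partial>PiM (insert i I) (\<lambda>_. UU))"
    using Sm pN by simp
  also have "\<dots> = (\<integral>\<^sup>+ x. (\<integral>\<^sup>+ y. indicator S (x(i := y)) \<partial>UU) \<partial>PiM I (\<lambda>_. UU))"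
    by (rule UP.product_nn_integral_insert[OF fI]) (use Sm in simp)
  also have "\<dots> \<le> (\<integral>\<^sup>+ x. \<delta> \<partial>PiM I (\<lambda>_. UU))"
  proof (rule nn_integral_mono_AE, rule AE_I2)
    fix x assume x: "x \<in> space (PiM I (\<lambda>_. UU))"
    have eq: "indicator S (x(i := y)) = (indicator {y. P x y} y :: ennreal)" for y
    proof -
      have "x(i:=y) \<in> space (pert N)"
        using measurable_space[OF measurable_component_update[OF x fI(2)], of y] pN by simp
      then show ?thesis using indep[of x y] by (simp add: S_def indicator_def)
    qed
    have meas: "(\<lambda>y. indicator S (x(i := y)) :: ennreal) \<in> borel_measurable UU"
      using measurable_comp[OF measurable_component_update[OF x fI(2)] borel_measurable_indicator[OF Sm]]
      by (simp add: o_def)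
    hence "(indicator {y. P x y} :: real \<Rightarrow> ennreal) \<in> borel_measurable UU" using eq by simp
    hence Pm: "{y. P x y} \<in> sets UU"
      by (subst (asm) borel_measurable_indicator_iff) simp
    show "(\<integral>\<^sup>+ y. indicator S (x(i := y)) \<partial>UU) \<le> \<delta>"
      using bound[of x] Pm by (simp add: eq)
  qed
  also have "\<dots> = \<delta>"
  proof -
    interpret p: prob_space "PiM I (\<lambda>_. UU)" by (rule prob_space_PiM) (simp add: prob_UU)
    show ?thesis by (simp add: p.emeasure_space_1)
  qed
  finally show ?thesis by (simp add: S_def)
qed


lemma comp_meas:
  "j < N \<Longrightarrow> (\<lambda>z. z j) \<in> borel_measurable (pert N)"
proof -
  assume "j < N"
  then have "(\<lambda>z. z j) \<in> measurable (PiM {..<N} (\<lambda>_. UU)) UU"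
    by (intro measurable_component_singleton) simp
  then show ?thesis unfolding pert_def
    by (subst measurable_cong_sets[of _ "PiM {..<N} (\<lambda>_. UU)" borel UU]) auto
qed

lemma AE_from_fiber:
  assumes i: "i < N"
    and A: "{z \<in> space (pert N). P z (z i)} \<in> sets (pert N)"
    and indep: "\<And>z w. P (z(i:=w)) = P z"
    and bound: "\<And>z. emeasure UU {y. P z y} = 0"
  shows "AE z in pert N. \<not> P z (z i)"
proof -
  have "emeasure (pert N) {z \<in> space (pert N). P z (z i)} \<le> 0"
    by (rule fiber_bound[OF i A indep]) (simp add: bound)
  then show ?thesis
    by (subst AE_iff_measurable[OF A]) auto
qed

lemma AE_unit: "AE z in pert N. \<forall>i\<in>{..<N}. 0 \<le> z i \<and> z i \<le> 1"
proof (rule AE_finite_allI)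
  fix i assume "i \<in> {..<N}"
  then have i: "i < N" by simp
  have [measurable]: "(\<lambda>z. z i) \<in> borel_measurable (pert N)" using i by (rule comp_meas)
  have e2: "{0..1::real} \<inter> {y. 0 \<le> y \<longrightarrow> \<not> y \<le> 1} = {}" by auto
  have "AE z in pert N. \<not> \<not> (0 \<le> z i \<and> z i \<le> 1)"
    by (rule AE_from_fiber[OF i, where P="\<lambda>z y. \<not> (0 \<le> y \<and> y \<le> 1)"])
       (simp_all add: e2)
  then show "AE z in pert N. 0 \<le> z i \<and> z i \<le> 1" by simp
qed simp


definition Fz :: "nat \<Rightarrow> real \<Rightarrow> (nat \<Rightarrow> real) \<Rightarrow> (nat \<Rightarrow> real) \<Rightarrow> real" where
  "Fz N \<eta> G z = (MAX i\<in>{..<N}. G i + \<eta> * z i)"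

lemma lin_meas: "i < N \<Longrightarrow> (\<lambda>z. a + b * z i) \<in> borel_measurable (pert N)"
proof -
  assume "i < N"
  then have [measurable]: "(\<lambda>z. z i) \<in> borel_measurable (pert N)" by (rule comp_meas)
  show ?thesis by measurable
qed

lemma Fz_meas[measurable]: "Fz N \<eta> G \<in> borel_measurable (pert N)"
proof -
  have "(\<lambda>z. MAX i\<in>{..<N}. G i + \<eta> * z i) \<in> borel_measurable (pert N)"
    by (rule borel_measurable_Max) (auto intro: lin_meas)
  then show ?thesis by (simp add: Fz_def[abs_def])
qed

lemma abs_Max_le_sum:
  fixes f :: "nat \<Rightarrow> real"
  assumes "finite K" "K \<noteq> {}"
  shows "\<bar>MAX i\<in>K. f i\<bar> \<le> (\<Sum>i\<in>K. \<bar>f i\<bar>)"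
proof -
  have "Max (f ` K) \<in> f ` K" using assms by (intro Max_in) auto
  then obtain k where k: "k \<in> K" "(MAX i\<in>K. f i) = f k" by auto
  have "\<bar>f k\<bar> \<le> (\<Sum>i\<in>K. \<bar>f i\<bar>)"
    by (rule member_le_sum[OF k(1)]) (auto simp: assms)
  then show ?thesis using k by simp
qed

lemma Fz_int: assumes "0 < N" shows "integrable (pert N) (Fz N \<eta> G)"
proof -
  interpret p: prob_space "pert N" by (rule prob_pert)
  show ?thesis
  proof (rule p.integrable_const_bound[where B="\<Sum>i<N. \<bar>G i\<bar> + \<bar>\<eta>\<bar>"])
    show "AE z in pert N. norm (Fz N \<eta> G z) \<le> (\<Sum>i<N. \<bar>G i\<bar> + \<bar>\<eta>\<bar>)"
      using AE_unit
    proof eventually_elim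
      case (elim z)
      have "\<bar>Fz N \<eta> G z\<bar> \<le> (\<Sum>i<N. \<bar>G i + \<eta> * z i\<bar>)"
        unfolding Fz_def by (rule abs_Max_le_sum) (use assms in auto)
      also have "\<dots> \<le> (\<Sum>i<N. \<bar>G i\<bar> + \<bar>\<eta>\<bar>)"
      proof (rule sum_mono)
        fix i assume "i \<in> {..<N}"
        then have "0 \<le> z i" "z i \<le> 1" using elim by auto
        then have "\<bar>\<eta> * z i\<bar> \<le> \<bar>\<eta>\<bar>"
          by (simp add: abs_mult mult_left_le)
        then show "\<bar>G i + \<eta> * z i\<bar> \<le> \<bar>G i\<bar> + \<bar>\<eta>\<bar>" by linarith
      qed
      finally show ?case by simp
    qed
  qed simp
qed

lemma emeasure_UU_single: "emeasure UU {a} = 0"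
proof -
  have "emeasure UU {a} = emeasure lborel ({0..1} \<inter> {a})" by (simp add: divide_ennreal_def)
  also have "\<dots> \<le> emeasure lborel {a}" by (rule emeasure_mono) auto
  finally show ?thesis by simp
qed

lemma AE_noties:
  assumes eta: "\<eta> > 0"
  shows "AE z in pert N. \<forall>i\<in>{..<N}. \<forall>j\<in>{..<N}. j \<noteq> i \<longrightarrow> G j + \<eta> * z j \<noteq> G i + \<eta> * z i"
proof (intro AE_finite_allI)
  fix i j assume "i \<in> {..<N}" "j \<in> {..<N}"
  then have i: "i < N" and j: "j < N" by auto
  have "AE z in pert N. \<not> (j \<noteq> i \<and> G j + \<eta> * z j = G i + \<eta> * z i)"
  proof (rule AE_from_fiber[OF i, where P="\<lambda>z y. j \<noteq> i \<and> G j + \<eta> * z j = G i + \<eta> * y"])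
    show "{z \<in> space (pert N). j \<noteq> i \<and> G j + \<eta> * z j = G i + \<eta> * z i} \<in> sets (pert N)"
    proof -
      have "{z \<in> space (pert N). j \<noteq> i \<and> G j + \<eta> * z j = G i + \<eta> * z i} =
        (if j \<noteq> i then {z \<in> space (pert N). G j + \<eta> * z j = G i + \<eta> * z i} else {})" by auto
      then show ?thesis by (simp add: borel_measurable_eq[OF lin_meas[OF j] lin_meas[OF i]])
    qed
    show "\<And>z w. (\<lambda>y. j \<noteq> i \<and> G j + \<eta> * (z(i := w)) j = G i + \<eta> * y) =
               (\<lambda>y. j \<noteq> i \<and> G j + \<eta> * z j = G i + \<eta> * y)"
      by (auto simp: fun_eq_iff)
    fix z
    have "{y. j \<noteq> i \<and> G j + \<eta> * z j = G i + \<eta> * y} \<subseteq> {(G j + \<eta> * z j - G i) / \<eta>}"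
      using eta by (auto simp: field_simps)
    then have "emeasure UU {y. j \<noteq> i \<and> G j + \<eta> * z j = G i + \<eta> * y} \<le> emeasure UU {(G j + \<eta> * z j - G i) / \<eta>}"
      by (rule emeasure_mono) simp
    then show "emeasure UU {y. j \<noteq> i \<and> G j + \<eta> * z j = G i + \<eta> * y} = 0"
      by (simp add: emeasure_UU_single del: emeasure_uniform_measure)
  qed
  then show "AE z in pert N. j \<noteq> i \<longrightarrow> G j + \<eta> * z j \<noteq> G i + \<eta> * z i" by auto
qed simp_all


definition ev :: "nat \<Rightarrow> real \<Rightarrow> (nat \<Rightarrow> real) \<Rightarrow> nat \<Rightarrow> (nat \<Rightarrow> real) set" where
  "ev N \<eta> G i = {z \<in> space (pert N). \<forall>j<N. j \<noteq> i \<longrightarrow> G j + \<eta> * z j < G i + \<eta> * z i}"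

lemma grad_prob_ev: "grad_prob N \<eta> G i = measure (pert N) (ev N \<eta> G i)"
  by (simp add: grad_prob_def ev_def)

lemma ev_meas: assumes "i < N" shows "ev N \<eta> G i \<in> sets (pert N)"
proof -
  have "ev N \<eta> G i = (\<Inter>j\<in>{..<N}. {z \<in> space (pert N). j \<noteq> i \<longrightarrow> G j + \<eta> * z j < G i + \<eta> * z i})"
    using assms by (auto simp: ev_def)
  also have "\<dots> \<in> sets (pert N)"
  proof (rule sets.finite_INT)
    fix j assume j: "j \<in> {..<N}"
    show "{z \<in> space (pert N). j \<noteq> i \<longrightarrow> G j + \<eta> * z j < G i + \<eta> * z i} \<in> sets (pert N)"
    proof (cases "j = i")
      case True then show ?thesis by simp
    next
      case False
      then have "{z \<in> space (pert N). j \<noteq> i \<longrightarrow> G j + \<eta> * z j < G i + \<eta> * z i}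
         = {z \<in> space (pert N). G j + \<eta> * z j < G i + \<eta> * z i}" by auto
      then show ?thesis using j assms
        by (simp add: borel_measurable_less[OF lin_meas lin_meas])
    qed
  qed (use assms in auto)
  finally show ?thesis .
qed

lemma sum_grad:
  assumes N: "0 < N" and eta: "\<eta> > 0"
  shows "(\<Sum>i<N. grad_prob N \<eta> G i) = 1"
proof -
  interpret p: prob_space "pert N" by (rule prob_pert)
  have disj: "disjoint_family_on (ev N \<eta> G) {..<N}"
    unfolding disjoint_family_on_def ev_def by fastforce
  have "measure (pert N) (\<Union>i\<in>{..<N}. ev N \<eta> G i) = (\<Sum>i<N. measure (pert N) (ev N \<eta> G i))"
    by (rule measure_finite_Union) (auto simp: disj ev_meas)
  moreover have "(\<Union>i\<in>{..<N}. ev N \<eta> G i) =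
      {z \<in> space (pert N). \<exists>i<N. \<forall>j<N. j \<noteq> i \<longrightarrow> G j + \<eta> * z j < G i + \<eta> * z i}"
    by (auto simp: ev_def)
  moreover have "measure (pert N) {z \<in> space (pert N). \<exists>i<N. \<forall>j<N. j \<noteq> i \<longrightarrow> G j + \<eta> * z j < G i + \<eta> * z i} = 1"
  proof (subst p.prob_Collect_eq_1)
    have "{z \<in> space (pert N). \<exists>i<N. \<forall>j<N. j \<noteq> i \<longrightarrow> G j + \<eta> * z j < G i + \<eta> * z i}
      = (\<Union>i\<in>{..<N}. ev N \<eta> G i)" by (auto simp: ev_def)
    then show "{z \<in> space (pert N). \<exists>i<N. \<forall>j<N. j \<noteq> i \<longrightarrow> G j + \<eta> * z j < G i + \<eta> * z i} \<in> p.events"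
      by (auto intro!: sets.finite_UN ev_meas)
    show "AE z in pert N. \<exists>i<N. \<forall>j<N. j \<noteq> i \<longrightarrow> G j + \<eta> * z j < G i + \<eta> * z i"
      using AE_noties[OF eta, of N G]
    proof eventually_elim
      case (elim z)
      define v where "v j = G j + \<eta> * z j" for j
      have "Max (v ` {..<N}) \<in> v ` {..<N}" using N by (intro Max_in) auto
      then obtain k where k: "k < N" "Max (v ` {..<N}) = v k" by auto
      have "\<forall>j<N. j \<noteq> k \<longrightarrow> v j < v k"
      proof (intro allI impI)
        fix j assume j: "j < N" "j \<noteq> k"
        have "v j \<le> v k" using k j by (metis Max_ge finite_imageI finite_lessThan imageI lessThan_iff)
        moreover have "v j \<noteq> v k" using elim j k by (auto simp: v_def)
        ultimately show "v j < v k" by simp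
      qed
      then show ?case using k by (auto simp: v_def)
    qed
  qed
  ultimately show ?thesis by (simp add: grad_prob_ev)
qed


lemma ptwise:
  fixes v :: "nat \<Rightarrow> real"
  assumes i: "i < N" and c: "0 \<le> c"
  shows "(MAX j\<in>{..<N}. (v(i := v i - c)) j) - (MAX j\<in>{..<N}. v j)
           + c * (if (\<forall>j<N. j \<noteq> i \<longrightarrow> v j < v i) then 1 else 0)
         \<le> c * (if (\<forall>j<N. j \<noteq> i \<longrightarrow> v j < v i) \<and> (\<exists>j<N. j \<noteq> i \<and> v i - c \<le> v j) then 1 else 0)"
proof -
  define w where "w = v(i := v i - c)"
  have ne: "{..<N} \<noteq> {}" using i by auto
  have fin: "finite {..<N}" by simp
  have wv: "w j \<le> v j" for j using c by (simp add: w_def)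
  have 1: "(MAX j\<in>{..<N}. w j) \<le> (MAX j\<in>{..<N}. v j)"
  proof -
    have "\<forall>j<N. w j \<le> (MAX j\<in>{..<N}. v j)"
      using fin by (meson wv Max_ge finite_imageI imageI lessThan_iff order_trans)
    then show ?thesis using ne by (simp add: Max_le_iff)
  qed
  show ?thesis
  proof (cases "\<forall>j<N. j \<noteq> i \<longrightarrow> v j < v i")
    case E: True
    show ?thesis
    proof (cases "\<exists>j<N. j \<noteq> i \<and> v i - c \<le> v j")
      case True
      then show ?thesis using E 1 unfolding w_def[symmetric] by simp
    next
      case False
      have "(MAX j\<in>{..<N}. w j) \<le> v i - c"
      proof -
        have "\<forall>j<N. w j \<le> v i - c" using False by (auto simp: w_def)
        then show ?thesis using ne by (simp add: Max_le_iff)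
      qed
      moreover have "v i \<le> (MAX j\<in>{..<N}. v j)"
        using ne fin i by (auto simp: Max_ge_iff)
      ultimately show ?thesis using E False unfolding w_def[symmetric] by auto
    qed
  next
    case nE: False
    then obtain k where k: "k < N" "k \<noteq> i" "v i \<le> v k" by (auto simp: not_less)
    have "(MAX j\<in>{..<N}. v j) \<le> (MAX j\<in>{..<N}. w j)"
    proof -
      have "\<forall>j<N. v j \<le> (MAX j\<in>{..<N}. w j)"
      proof (intro allI impI)
        fix j assume j: "j < N"
        show "v j \<le> (MAX j\<in>{..<N}. w j)"
        proof (cases "j = i")
          case True
          have "w k \<le> (MAX j\<in>{..<N}. w j)" using k fin by (auto intro: Max_ge)
          moreover have "w k = v k" using k by (simp add: w_def)
          ultimately show ?thesis using True j k by simp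
        next
          case False
          have "w j \<le> (MAX j\<in>{..<N}. w j)" using j fin by (auto intro: Max_ge)
          moreover have "w j = v j" using False by (simp add: w_def)
          ultimately show ?thesis by simp
        qed
      qed
      then show ?thesis using ne by (simp add: Max_le_iff)
    qed
    then show ?thesis using 1 nE unfolding w_def[symmetric] by auto
  qed
qed


definition Bset :: "nat \<Rightarrow> real \<Rightarrow> (nat \<Rightarrow> real) \<Rightarrow> nat \<Rightarrow> real \<Rightarrow> (nat \<Rightarrow> real) set" where
  "Bset N \<eta> G i c = {z \<in> space (pert N). (\<forall>j<N. j \<noteq> i \<longrightarrow> G j + \<eta> * z j < G i + \<eta> * z i)
      \<and> (\<exists>j<N. j \<noteq> i \<and> G i + \<eta> * z i - c \<le> G j + \<eta> * z j)}"

lemma Bset_meas: assumes i: "i < N" shows "Bset N \<eta> G i c \<in> sets (pert N)"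
proof -
  have "Bset N \<eta> G i c = ev N \<eta> G i \<inter>
     (\<Union>j\<in>{..<N} - {i}. {z \<in> space (pert N). G i + \<eta> * z i - c \<le> G j + \<eta> * z j})"
    by (auto simp: Bset_def ev_def)
  also have "\<dots> \<in> sets (pert N)"
  proof (intro sets.Int ev_meas[OF i] sets.finite_UN)
    fix j assume "j \<in> {..<N} - {i}"
    then have j: "j < N" by simp
    have m1: "(\<lambda>z. (G i - c) + \<eta> * z i) \<in> borel_measurable (pert N)" by (rule lin_meas[OF i])
    have "{z \<in> space (pert N). G i + \<eta> * z i - c \<le> G j + \<eta> * z j}
        = {z \<in> space (pert N). (G i - c) + \<eta> * z i \<le> G j + \<eta> * z j}" by auto
    then show "{z \<in> space (pert N). G i + \<eta> * z i - c \<le> G j + \<eta> * z j} \<in> sets (pert N)"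
      by (simp only: borel_measurable_le[OF m1 lin_meas[OF j]])
  qed simp
  finally show ?thesis .
qed

lemma emeasure_UU_Icc: "a \<le> b \<Longrightarrow> emeasure UU {a..b} \<le> ennreal (b - a)"
proof -
  assume "a \<le> b"
  have "emeasure UU {a..b} = emeasure lborel ({0..1} \<inter> {a..b})" by (simp add: divide_ennreal_def)
  also have "\<dots> \<le> emeasure lborel {a..b}" by (rule emeasure_mono) auto
  finally show ?thesis using \<open>a \<le> b\<close> by simp
qed

lemma Bset_measure:
  assumes i: "i < N" and eta: "\<eta> > 0" and c: "0 \<le> c"
  shows "measure (pert N) (Bset N \<eta> G i c) \<le> c / \<eta>"
proof (cases "{..<N} - {i} = {}")
  case True
  then have "Bset N \<eta> G i c = {}" by (auto simp: Bset_def)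
  then show ?thesis using eta c by simp
next
  case ne: False
  interpret p: prob_space "pert N" by (rule prob_pert)
  define M where "M z = (MAX j\<in>{..<N} - {i}. G j + \<eta> * z j)" for z
  have Mm: "M \<in> borel_measurable (pert N)"
  proof -
    have "(\<lambda>z. MAX j\<in>{..<N} - {i}. G j + \<eta> * z j) \<in> borel_measurable (pert N)"
      by (rule borel_measurable_Max) (auto intro: lin_meas)
    then show ?thesis by (simp add: M_def[abs_def])
  qed
  define S where "S = {z \<in> space (pert N). M z < G i + \<eta> * z i \<and> G i + \<eta> * z i \<le> M z + c}"
  have Mc: "(\<lambda>z. M z + c) \<in> borel_measurable (pert N)" using Mm by simp
  have Sm: "S \<in> sets (pert N)"
  proof -
    have "S = {z \<in> space (pert N). M z < G i + \<eta> * z i} \<inter> {z \<in> space (pert N). G i + \<eta> * z i \<le> M z + c}"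
      by (auto simp: S_def)
    then show ?thesis
      by (simp add: sets.Int borel_measurable_less[OF Mm lin_meas[OF i]] borel_measurable_le[OF lin_meas[OF i] Mc])
  qed
  have sub: "Bset N \<eta> G i c \<subseteq> S"
  proof
    fix z assume z: "z \<in> Bset N \<eta> G i c"
    then obtain j where j: "j < N" "j \<noteq> i" "G i + \<eta> * z i - c \<le> G j + \<eta> * z j"
      by (auto simp: Bset_def)
    have fin: "finite ({..<N} - {i})" by simp
    have "G j + \<eta> * z j \<le> M z" unfolding M_def using j fin by (intro Max_ge) auto
    moreover have "M z < G i + \<eta> * z i"
    proof -
      have "\<forall>j\<in>{..<N} - {i}. G j + \<eta> * z j < G i + \<eta> * z i" using z by (auto simp: Bset_def)
      then show ?thesis unfolding M_def using fin ne by (simp add: Max_less_iff)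
    qed
    ultimately show "z \<in> S" using z j by (auto simp: S_def Bset_def)
  qed
  have "emeasure (pert N) S \<le> ennreal (c / \<eta>)"
    unfolding S_def
  proof (rule fiber_bound[OF i, where P="\<lambda>z y. M z < G i + \<eta> * y \<and> G i + \<eta> * y \<le> M z + c"])
    show "{z \<in> space (pert N). M z < G i + \<eta> * z i \<and> G i + \<eta> * z i \<le> M z + c} \<in> sets (pert N)"
      using Sm by (simp add: S_def)
    have "M (z(i := w)) = M z" for z w unfolding M_def by (intro arg_cong[where f=Max] image_cong) auto
    then show "\<And>z w. (\<lambda>y. M (z(i := w)) < G i + \<eta> * y \<and> G i + \<eta> * y \<le> M (z(i := w)) + c) =
                     (\<lambda>y. M z < G i + \<eta> * y \<and> G i + \<eta> * y \<le> M z + c)" by simp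
    fix z
    have "{y. M z < G i + \<eta> * y \<and> G i + \<eta> * y \<le> M z + c} \<subseteq> {(M z - G i) / \<eta> .. (M z - G i + c) / \<eta>}"
      using eta by (auto simp: field_simps)
    then have "emeasure UU {y. M z < G i + \<eta> * y \<and> G i + \<eta> * y \<le> M z + c}
        \<le> emeasure UU {(M z - G i) / \<eta> .. (M z - G i + c) / \<eta>}"
      by (rule emeasure_mono) simp
    also have "\<dots> \<le> ennreal ((M z - G i + c) / \<eta> - (M z - G i) / \<eta>)"
      using eta c by (intro emeasure_UU_Icc) (simp add: divide_right_mono)
    also have "(M z - G i + c) / \<eta> - (M z - G i) / \<eta> = c / \<eta>"
      by (simp add: add_divide_distrib diff_divide_distrib)
    finally show "emeasure UU {y. M z < G i + \<eta> * y \<and> G i + \<eta> * y \<le> M z + c} \<le> ennreal (c / \<eta>)" .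
  qed
  then have "measure (pert N) S \<le> c / \<eta>"
    using eta c by (simp add: p.emeasure_eq_measure)
  moreover have "measure (pert N) (Bset N \<eta> G i c) \<le> measure (pert N) S"
    by (rule p.finite_measure_mono[OF sub Sm])
  ultimately show ?thesis by simp
qed


lemma D_bound:
  fixes G :: "nat \<Rightarrow> real"
  assumes N: "0 < N" and i: "i < N" and c: "0 \<le> c" and eta: "\<eta> > 0"
  defines "D \<equiv> smoothed_potential N \<eta> (G(i := G i - c)) - smoothed_potential N \<eta> G + c * grad_prob N \<eta> G i"
  shows "D \<le> c * grad_prob N \<eta> G i" and "D \<le> c * (c / \<eta>)"
proof -
  interpret p: prob_space "pert N" by (rule prob_pert)
  define E where "E = ev N \<eta> G i"
  define B where "B = Bset N \<eta> G i c"
  have Em: "E \<in> sets (pert N)" using ev_meas[OF i] by (simp add: E_def)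
  have Bm: "B \<in> sets (pert N)" using Bset_meas[OF i] by (simp add: B_def)
  have iE: "integrable (pert N) (indicator E :: _ \<Rightarrow> real)" using Em by (intro integrable_real_indicator) (auto simp: less_top[symmetric])
  have iB: "integrable (pert N) (indicator B :: _ \<Rightarrow> real)" using Bm by (intro integrable_real_indicator) (auto simp: less_top[symmetric])
  have i1: "integrable (pert N) (Fz N \<eta> (G(i := G i - c)))" by (rule Fz_int[OF N])
  have i2: "integrable (pert N) (Fz N \<eta> G)" by (rule Fz_int[OF N])
  have iD: "integrable (pert N) (\<lambda>z. Fz N \<eta> (G(i := G i - c)) z - Fz N \<eta> G z + c * indicator E z)"
    using i1 i2 iE by auto
  have Deq: "D = (\<integral>z. Fz N \<eta> (G(i := G i - c)) z - Fz N \<eta> G z + c * indicator E z \<partial>pert N)"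
    using i1 i2 iE Em
    by (simp add: D_def smoothed_potential_def Fz_def[abs_def] grad_prob_ev E_def Int_absorb2 sets.sets_into_space)
  have pw: "Fz N \<eta> (G(i := G i - c)) z - Fz N \<eta> G z + c * indicator E z \<le> c * indicator E z
      \<and> Fz N \<eta> (G(i := G i - c)) z - Fz N \<eta> G z + c * indicator E z \<le> c * indicator B z"
    if z: "z \<in> space (pert N)" for z
  proof -
    define v where "v j = G j + \<eta> * z j" for j
    have fz1: "Fz N \<eta> (G(i := G i - c)) z = (MAX j\<in>{..<N}. (v(i := v i - c)) j)"
    proof -
      have "(\<lambda>j. (G(i := G i - c)) j + \<eta> * z j) = v(i := v i - c)" by (auto simp: fun_eq_iff v_def)
      then show ?thesis unfolding Fz_def by metis
    qed
    have fz2: "Fz N \<eta> G z = (MAX j\<in>{..<N}. v j)" by (simp add: Fz_def v_def)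
    have iE': "indicator E z = (if (\<forall>j<N. j \<noteq> i \<longrightarrow> v j < v i) then 1 else (0::real))"
      using z by (simp add: E_def ev_def v_def indicator_def)
    have iB': "indicator B z = (if (\<forall>j<N. j \<noteq> i \<longrightarrow> v j < v i) \<and> (\<exists>j<N. j \<noteq> i \<and> v i - c \<le> v j) then 1 else (0::real))"
      using z by (simp add: B_def Bset_def v_def indicator_def)
    have "(MAX j\<in>{..<N}. (v(i := v i - c)) j) \<le> (MAX j\<in>{..<N}. v j)"
      using ptwise[OF i c, of v] c by (auto split: if_splits)
    then show ?thesis using ptwise[OF i c, of v] c unfolding fz1 fz2 iE' iB' by auto
  qed
  have "D \<le> (\<integral>z. c * indicator E z \<partial>pert N)"
    unfolding Deq by (rule integral_mono[OF iD]) (use iE pw in auto)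
  also have "\<dots> = c * grad_prob N \<eta> G i"
    using Em by (simp add: grad_prob_ev E_def Int_absorb2 sets.sets_into_space)
  finally show "D \<le> c * grad_prob N \<eta> G i" .
  have "D \<le> (\<integral>z. c * indicator B z \<partial>pert N)"
    unfolding Deq by (rule integral_mono[OF iD]) (use iB pw in auto)
  also have "\<dots> = c * measure (pert N) B"
    using Bm by (simp add: Int_absorb2 sets.sets_into_space)
  also have "\<dots> \<le> c * (c / \<eta>)"
    using mult_left_mono[OF Bset_measure[OF i eta c, of G] c] by (simp add: B_def)
  finally show "D \<le> c * (c / \<eta>)" .
qed




lemma step_bound:
  fixes G :: "nat \<Rightarrow> real"
  assumes N: "0 < N" and i: "i < N" and eta: "\<eta> > 0" and g: "-1 \<le> g0" "g0 \<le> 0"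
    and p: "p = grad_prob N \<eta> G i" "0 < p"
  shows "p * (smoothed_potential N \<eta> (G(i := G i + g0 / p)) - g0 - smoothed_potential N \<eta> G) \<le> 1 / sqrt \<eta>"
proof -
  define c where "c = - g0 / p"
  have c: "0 \<le> c" using g p by (simp add: c_def divide_nonpos_pos)
  have Gi: "G i + g0 / p = G i - c" by (simp add: c_def)
  have cp: "c * p = - g0" using p by (simp add: c_def)
  define D where "D = smoothed_potential N \<eta> (G(i := G i + g0 / p)) - g0 - smoothed_potential N \<eta> G"
  have D1: "D \<le> c * p" and D2: "D \<le> c * (c / \<eta>)"
    using D_bound[OF N i c eta, of G] unfolding D_def Gi p(1)[symmetric] cp by auto
  have "p * D \<le> p * 1"
    using D1 cp g p by (intro mult_left_mono) auto
  moreover have "p * D \<le> 1 / (p * \<eta>)"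
  proof -
    have "p * D \<le> p * (c * (c / \<eta>))" using D2 p by (intro mult_left_mono) auto
    also have "p * (c * (c / \<eta>)) = g0 ^ 2 / (p * \<eta>)"
      using p by (simp add: c_def power2_eq_square field_simps)
    also have "\<dots> \<le> 1 / (p * \<eta>)"
    proof -
      have "(-g0) * (-g0) \<le> 1" using g by (intro mult_le_one) auto
      then have "g0 * g0 \<le> 1" by simp
      then show ?thesis using g p eta by (intro divide_right_mono) (auto simp: power2_eq_square)
    qed
    finally show ?thesis .
  qed
  moreover have "min p (1 / (p * \<eta>)) \<le> 1 / sqrt \<eta>"
  proof (cases "p \<le> 1 / sqrt \<eta>")
    case True then show ?thesis by simp
  next
    case False
    then have "1 / sqrt \<eta> < p" by simp
    then have "1 < p * sqrt \<eta>" using eta by (simp add: field_simps)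
    moreover have sq: "sqrt \<eta> * sqrt \<eta> = \<eta>" using eta by simp
    have spos: "0 < sqrt \<eta>" using eta by simp
    ultimately have "1 * sqrt \<eta> \<le> (p * sqrt \<eta>) * sqrt \<eta>"
      by (intro mult_right_mono) auto
    then have le: "sqrt \<eta> \<le> p * \<eta>" using sq by (simp add: mult.assoc)
    have "1 / (p * \<eta>) \<le> 1 / sqrt \<eta>"
      by (rule divide_left_mono[OF le]) (use spos p eta in auto)
    then show ?thesis by simp
  qed
  ultimately show ?thesis unfolding D_def by linarith
qed



lemma grad_nonneg: "0 \<le> grad_prob N \<eta> G i"
  by (simp add: grad_prob_def)

lemma pmf_arm:
  assumes N: "0 < N" and eta: "\<eta> > 0"
  shows "pmf (arm_pmf N \<eta> G) i = (if i < N then grad_prob N \<eta> G i else 0)"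
  unfolding arm_pmf_def
proof (rule pmf_embed_pmf)
  show "\<And>x. 0 \<le> (if x < N then grad_prob N \<eta> G x else 0)" by (simp add: grad_nonneg)
  have "(\<integral>\<^sup>+x. ennreal (if x < N then grad_prob N \<eta> G x else 0) \<partial>count_space UNIV)
      = (\<Sum>x\<in>{..<N}. ennreal (if x < N then grad_prob N \<eta> G x else 0))"
    by (rule nn_integral_count_space') auto
  also have "\<dots> = ennreal (\<Sum>x\<in>{..<N}. grad_prob N \<eta> G x)"
    by (simp add: grad_nonneg)
  also have "\<dots> = 1" using sum_grad[OF N eta] by simp
  finally show "(\<integral>\<^sup>+x. ennreal (if x < N then grad_prob N \<eta> G x else 0) \<partial>count_space UNIV) = 1" .
qed

lemma set_arm:
  assumes N: "0 < N" and eta: "\<eta> > 0" and i: "i \<in> set_pmf (arm_pmf N \<eta> G)"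
  shows "i < N" "0 < grad_prob N \<eta> G i"
  using i pmf_arm[OF N eta, of G i] grad_nonneg[of N \<eta> G i]
  by (auto simp: set_pmf_iff split: if_splits)

lemma exp_arm:
  fixes f :: "nat \<Rightarrow> real"
  assumes N: "0 < N" and eta: "\<eta> > 0"
  shows "measure_pmf.expectation (arm_pmf N \<eta> G) f = (\<Sum>i<N. grad_prob N \<eta> G i * f i)"
proof -
  have "measure_pmf.expectation (arm_pmf N \<eta> G) f = (\<Sum>i\<in>{..<N}. pmf (arm_pmf N \<eta> G) i *\<^sub>R f i)"
    by (rule integral_measure_pmf) (use set_arm[OF N eta] in auto)
  then show ?thesis by (simp add: pmf_arm[OF N eta])
qed

lemma exp_bind:
  fixes f :: "'b \<Rightarrow> real"
  assumes fp: "finite (set_pmf p)" and fK: "\<And>x. x \<in> set_pmf p \<Longrightarrow> finite (set_pmf (K x))"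
  shows "measure_pmf.expectation (bind_pmf p K) f
       = measure_pmf.expectation p (\<lambda>x. measure_pmf.expectation (K x) f)"
proof -
  define P where "P = set_pmf p"
  define S where "S = (\<Union>x\<in>P. set_pmf (K x))"
  have fS: "finite S" using fp fK by (auto simp: S_def P_def)
  have pb: "pmf (bind_pmf p K) y = (\<Sum>x\<in>P. pmf p x * pmf (K x) y)" for y
  proof -
    have "pmf (bind_pmf p K) y = (\<integral>x. pmf (K x) y \<partial>measure_pmf p)" by (rule pmf_bind)
    also have "\<dots> = (\<Sum>x\<in>P. pmf p x *\<^sub>R pmf (K x) y)"
      by (rule integral_measure_pmf) (auto simp: P_def fp)
    finally show ?thesis by simp
  qed
  have "measure_pmf.expectation (bind_pmf p K) f = (\<Sum>y\<in>S. pmf (bind_pmf p K) y *\<^sub>R f y)"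
    by (rule integral_measure_pmf[OF fS]) (auto simp: S_def P_def)
  also have "\<dots> = (\<Sum>y\<in>S. \<Sum>x\<in>P. pmf p x * (pmf (K x) y * f y))"
    by (simp add: pb sum_distrib_right mult.assoc)
  also have "\<dots> = (\<Sum>x\<in>P. pmf p x * (\<Sum>y\<in>S. pmf (K x) y * f y))"
    by (subst sum.swap) (simp add: sum_distrib_left)
  also have "\<dots> = (\<Sum>x\<in>P. pmf p x *\<^sub>R measure_pmf.expectation (K x) f)"
  proof (rule sum.cong[OF refl])
    fix x assume x: "x \<in> P"
    have "measure_pmf.expectation (K x) f = (\<Sum>y\<in>S. pmf (K x) y *\<^sub>R f y)"
      by (rule integral_measure_pmf[OF fS]) (use x in \<open>auto simp: S_def\<close>)
    then show "pmf p x * (\<Sum>y\<in>S. pmf (K x) y * f y) = pmf p x *\<^sub>R measure_pmf.expectation (K x) f"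
      by simp
  qed
  also have "\<dots> = measure_pmf.expectation p (\<lambda>x. measure_pmf.expectation (K x) f)"
    by (rule integral_measure_pmf[symmetric]) (auto simp: P_def fp)
  finally show ?thesis .
qed

lemma hist_supp:
  assumes N: "0 < N" and eta: "\<eta> > 0"
  shows "set_pmf (hist N \<eta> g t) \<subseteq> {hs. set hs \<subseteq> {..<N} \<and> length hs = t}"
proof (induction t)
  case 0 then show ?case by simp
next
  case (Suc t) then show ?case using set_arm(1)[OF N eta] by fastforce
qed

lemma hist_finite:
  assumes N: "0 < N" and eta: "\<eta> > 0"
  shows "finite (set_pmf (hist N \<eta> g t))"
  by (rule finite_subset[OF hist_supp[OF N eta]]) (rule finite_lists_length_eq, simp)

lemma arm_finite:
  assumes N: "0 < N" and eta: "\<eta> > 0"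
  shows "finite (set_pmf (arm_pmf N \<eta> G))"
  by (rule finite_subset[of _ "{..<N}"]) (use set_arm(1)[OF N eta] in auto)

lemma exp_hist_Suc:
  fixes f :: "nat list \<Rightarrow> real"
  assumes N: "0 < N" and eta: "\<eta> > 0"
  shows "measure_pmf.expectation (hist N \<eta> g (Suc t)) f
     = measure_pmf.expectation (hist N \<eta> g t)
         (\<lambda>hs. \<Sum>i<N. grad_prob N \<eta> (est N \<eta> g hs) i * f (i # hs))"
proof -
  have "measure_pmf.expectation (hist N \<eta> g (Suc t)) f
     = measure_pmf.expectation (hist N \<eta> g t)
         (\<lambda>hs. measure_pmf.expectation (map_pmf (\<lambda>i. i # hs) (arm_pmf N \<eta> (est N \<eta> g hs))) f)"
    unfolding hist.simps by (rule exp_bind) (auto simp: hist_finite[OF N eta] arm_finite[OF N eta])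
  then show ?thesis by (simp add: exp_arm[OF N eta])
qed



lemma Phi_zero:
  assumes N: "0 < N" and eta: "\<eta> > 0"
  shows "smoothed_potential N \<eta> (\<lambda>_. 0) \<le> \<eta>"
proof -
  interpret p: prob_space "pert N" by (rule prob_pert)
  have "smoothed_potential N \<eta> (\<lambda>_. 0) = (\<integral>z. Fz N \<eta> (\<lambda>_. 0) z \<partial>pert N)"
    by (simp add: smoothed_potential_def Fz_def)
  also have "\<dots> \<le> (\<integral>z. \<eta> \<partial>pert N)"
  proof (rule integral_mono_AE[OF Fz_int[OF N]])
    show "integrable (pert N) (\<lambda>z. \<eta>)" by simp
    show "AE z in pert N. Fz N \<eta> (\<lambda>_. 0) z \<le> \<eta>"
      using AE_unit
    proof eventually_elim
      case (elim z)
      have "\<forall>i<N. 0 + \<eta> * z i \<le> \<eta>"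
        using elim eta by (auto intro: mult_left_le)
      then show ?case using N unfolding Fz_def by (subst Max_le_iff) auto
    qed
  qed
  also have "\<dots> = \<eta>" by (simp add: p.prob_space)
  finally show ?thesis .
qed

lemma Phi_ge:
  assumes N: "0 < N" and eta: "\<eta> > 0" and k: "k < N"
  shows "G k \<le> smoothed_potential N \<eta> G"
proof -
  interpret p: prob_space "pert N" by (rule prob_pert)
  have "G k = (\<integral>z. G k \<partial>pert N)" by (simp add: p.prob_space)
  also have "\<dots> \<le> (\<integral>z. Fz N \<eta> G z \<partial>pert N)"
  proof (rule integral_mono_AE[OF _ Fz_int[OF N]])
    show "integrable (pert N) (\<lambda>z. G k)" by simp
    show "AE z in pert N. G k \<le> Fz N \<eta> G z"
      using AE_unit
    proof eventually_elim
      case (elim z)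
      have "G k \<le> G k + \<eta> * z k" using elim k eta by simp
      also have "\<dots> \<le> Fz N \<eta> G z" unfolding Fz_def using k by (intro Max_ge) auto
      finally show ?case .
    qed
  qed
  also have "\<dots> = smoothed_potential N \<eta> G"
    by (simp add: smoothed_potential_def Fz_def[abs_def])
  finally show ?thesis .
qed

lemma sum_rev_Cons:
  assumes "length hs = t"
  shows "(\<Sum>s<Suc t. g s (rev (i # hs) ! s)) = (\<Sum>s<t. g s (rev hs ! s)) + g t (i::nat)"
proof -
  have "(\<Sum>s<t. g s (rev (i # hs) ! s)) = (\<Sum>s<t. g s (rev hs ! s))"
    by (rule sum.cong) (use assms in \<open>auto simp: nth_append\<close>)
  moreover have "rev (i # hs) ! t = i" using assms by (simp add: nth_append)
  ultimately show ?thesis by simp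
qed

context
  fixes N T :: nat and \<eta> :: real and g :: "nat \<Rightarrow> nat \<Rightarrow> real"
  assumes N: "0 < N" and eta: "\<eta> > 0"
    and gb: "\<forall>t<T. \<forall>i<N. -1 \<le> g t i \<and> g t i \<le> 0"
begin

lemma int_hist[simp]: "integrable (measure_pmf (hist N \<eta> g t)) (f :: _ \<Rightarrow> real)"
  by (rule integrable_measure_pmf_finite[OF hist_finite[OF N eta]])

lemma Q_bound:
  "t \<le> T \<Longrightarrow> measure_pmf.expectation (hist N \<eta> g t)
      (\<lambda>hs. smoothed_potential N \<eta> (est N \<eta> g hs) - (\<Sum>s<t. g s (rev hs ! s)))
     \<le> \<eta> + real t * (real N / sqrt \<eta>)"
proof (induction t)
  case 0
  then show ?case using Phi_zero[OF N eta] by simp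
next
  case (Suc t)
  then have t: "t < T" by simp
  let ?Phi = "smoothed_potential N \<eta>"
  let ?E = "est N \<eta> g"
  have "measure_pmf.expectation (hist N \<eta> g (Suc t))
      (\<lambda>hs. ?Phi (?E hs) - (\<Sum>s<Suc t. g s (rev hs ! s)))
    = measure_pmf.expectation (hist N \<eta> g t)
      (\<lambda>hs. \<Sum>i<N. grad_prob N \<eta> (?E hs) i * (?Phi (?E (i # hs)) - (\<Sum>s<Suc t. g s (rev (i # hs) ! s))))"
    by (rule exp_hist_Suc[OF N eta])
  also have "\<dots> \<le> measure_pmf.expectation (hist N \<eta> g t)
      (\<lambda>hs. (?Phi (?E hs) - (\<Sum>s<t. g s (rev hs ! s))) + real N / sqrt \<eta>)"
  proof (rule integral_mono_AE)
    show "AE hs in measure_pmf (hist N \<eta> g t).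
      (\<Sum>i<N. grad_prob N \<eta> (?E hs) i * (?Phi (?E (i # hs)) - (\<Sum>s<Suc t. g s (rev (i # hs) ! s))))
      \<le> (?Phi (?E hs) - (\<Sum>s<t. g s (rev hs ! s))) + real N / sqrt \<eta>"
    proof (rule AE_pmfI)
      fix hs assume hs: "hs \<in> set_pmf (hist N \<eta> g t)"
      then have len: "length hs = t" using hist_supp[OF N eta] by blast
      define G where "G = ?E hs"
      define S where "S = (\<Sum>s<t. g s (rev hs ! s))"
      define p where "p i = grad_prob N \<eta> G i" for i
      have "(\<Sum>i<N. grad_prob N \<eta> (?E hs) i * (?Phi (?E (i # hs)) - (\<Sum>s<Suc t. g s (rev (i # hs) ! s))))
          = (\<Sum>i<N. p i * (?Phi (G(i := G i + g t i / p i)) - g t i)) - (\<Sum>i<N. p i) * S"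
      proof -
        have "\<And>i. i \<in> {..<N} \<Longrightarrow> grad_prob N \<eta> (?E hs) i * (?Phi (?E (i # hs)) - (\<Sum>s<Suc t. g s (rev (i # hs) ! s)))
           = p i * (?Phi (G(i := G i + g t i / p i)) - g t i) - p i * S"
          unfolding sum_rev_Cons[OF len] by (simp add: G_def S_def p_def len Let_def algebra_simps)
        then have "(\<Sum>i<N. grad_prob N \<eta> (?E hs) i * (?Phi (?E (i # hs)) - (\<Sum>s<Suc t. g s (rev (i # hs) ! s))))
           = (\<Sum>i<N. p i * (?Phi (G(i := G i + g t i / p i)) - g t i) - p i * S)"
          by (rule sum.cong[OF refl])
        then show ?thesis by (simp add: sum_subtractf sum_distrib_right)
      qed
      also have "\<dots> = (\<Sum>i<N. p i * (?Phi (G(i := G i + g t i / p i)) - g t i)) - S"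
        using sum_grad[OF N eta] by (simp add: p_def)
      also have "(\<Sum>i<N. p i * (?Phi (G(i := G i + g t i / p i)) - g t i)) \<le> (\<Sum>i<N. p i * ?Phi G + 1 / sqrt \<eta>)"
      proof (rule sum_mono)
        fix i assume i: "i \<in> {..<N}"
        show "p i * (?Phi (G(i := G i + g t i / p i)) - g t i) \<le> p i * ?Phi G + 1 / sqrt \<eta>"
        proof (cases "p i = 0")
          case True then show ?thesis using eta by simp
        next
          case False
          then have "0 < p i" using grad_nonneg[of N \<eta> G i] by (simp add: p_def)
          then have "p i * (?Phi (G(i := G i + g t i / p i)) - g t i - ?Phi G) \<le> 1 / sqrt \<eta>"
            using gb t i by (intro step_bound[OF N _ eta]) (auto simp: p_def)
          then show ?thesis by (simp add: algebra_simps)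
        qed
      qed
      also have "(\<Sum>i<N. p i * ?Phi G + 1 / sqrt \<eta>) = ?Phi G + real N / sqrt \<eta>"
        using sum_grad[OF N eta] by (simp add: p_def sum.distrib sum_distrib_right[symmetric])
      finally show "(\<Sum>i<N. grad_prob N \<eta> (?E hs) i * (?Phi (?E (i # hs)) - (\<Sum>s<Suc t. g s (rev (i # hs) ! s))))
        \<le> (?Phi (?E hs) - (\<Sum>s<t. g s (rev hs ! s))) + real N / sqrt \<eta>"
        by (simp add: G_def S_def)
    qed
  qed simp_all
  also have "\<dots> = measure_pmf.expectation (hist N \<eta> g t)
      (\<lambda>hs. ?Phi (?E hs) - (\<Sum>s<t. g s (rev hs ! s))) + real N / sqrt \<eta>"
    by simp
  also have "\<dots> \<le> \<eta> + real t * (real N / sqrt \<eta>) + real N / sqrt \<eta>"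
    using Suc t by simp
  also have "\<eta> + real t * (real N / sqrt \<eta>) + real N / sqrt \<eta> = \<eta> + real (Suc t) * (real N / sqrt \<eta>)"
    by (simp add: algebra_simps add_divide_distrib)
  finally show ?case .
qed

lemma est_mean:
  "t \<le> T \<Longrightarrow> i < N \<Longrightarrow> (\<Sum>s<t. g s i) \<le> measure_pmf.expectation (hist N \<eta> g t) (\<lambda>hs. est N \<eta> g hs i)"
proof (induction t)
  case 0 then show ?case by simp
next
  case (Suc t)
  then have t: "t < T" and i: "i < N" by auto
  let ?E = "est N \<eta> g"
  have "(\<Sum>s<Suc t. g s i) = (\<Sum>s<t. g s i) + g t i" by simp
  also have "\<dots> \<le> measure_pmf.expectation (hist N \<eta> g t) (\<lambda>hs. ?E hs i) + g t i"
    using Suc t i by simp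
  also have "\<dots> = measure_pmf.expectation (hist N \<eta> g t) (\<lambda>hs. ?E hs i + g t i)"
    by simp
  also have "\<dots> \<le> measure_pmf.expectation (hist N \<eta> g t)
      (\<lambda>hs. \<Sum>j<N. grad_prob N \<eta> (?E hs) j * ?E (j # hs) i)"
  proof (rule integral_mono_AE)
    show "AE hs in measure_pmf (hist N \<eta> g t). ?E hs i + g t i \<le> (\<Sum>j<N. grad_prob N \<eta> (?E hs) j * ?E (j # hs) i)"
    proof (rule AE_pmfI)
      fix hs assume hs: "hs \<in> set_pmf (hist N \<eta> g t)"
      then have len: "length hs = t" using hist_supp[OF N eta] by blast
      define G where "G = ?E hs"
      define p where "p j = grad_prob N \<eta> G j" for j
      have "(\<Sum>j<N. grad_prob N \<eta> (?E hs) j * ?E (j # hs) i)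
          = (\<Sum>j<N. p j * G i + (if j = i then p i * (g t i / p i) else 0))"
        by (rule sum.cong[OF refl]) (auto simp: G_def p_def len Let_def algebra_simps)
      also have "\<dots> = G i + p i * (g t i / p i)"
        using sum_grad[OF N eta, of G] i by (simp add: sum.distrib p_def sum_distrib_right[symmetric])
      finally have eq: "(\<Sum>j<N. grad_prob N \<eta> (?E hs) j * ?E (j # hs) i) = G i + p i * (g t i / p i)" .
      have "p i * (g t i / p i) \<ge> g t i"
        using gb t i by (cases "p i = 0") auto
      then show "?E hs i + g t i \<le> (\<Sum>j<N. grad_prob N \<eta> (?E hs) j * ?E (j # hs) i)"
        unfolding eq by (simp add: G_def)
    qed
  qed simp_all
  also have "\<dots> = measure_pmf.expectation (hist N \<eta> g (Suc t)) (\<lambda>hs. ?E hs i)"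
    by (rule exp_hist_Suc[OF N eta, symmetric])
  finally show ?case .
qed

lemma regret_bound: "expected_regret N T \<eta> g \<le> \<eta> + real T * (real N / sqrt \<eta>)"
proof -
  let ?H = "hist N \<eta> g T"
  let ?E = "est N \<eta> g"
  let ?Phi = "smoothed_potential N \<eta>"
  define S where "S hs = (\<Sum>s<T. g s (rev hs ! s))" for hs
  define M where "M = (MAX i\<in>{..<N}. \<Sum>t<T. g t i)"
  have "M \<in> (\<lambda>i. \<Sum>t<T. g t i) ` {..<N}" unfolding M_def using N by (intro Max_in) auto
  then obtain k where k: "k < N" "M = (\<Sum>t<T. g t k)" by auto
  have "expected_regret N T \<eta> g = M - measure_pmf.expectation ?H S"
    by (simp add: expected_regret_def M_def S_def[abs_def])
  also have "M \<le> measure_pmf.expectation ?H (\<lambda>hs. ?E hs k)"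
    using est_mean[of T k] k by simp
  also have "measure_pmf.expectation ?H (\<lambda>hs. ?E hs k) \<le> measure_pmf.expectation ?H (\<lambda>hs. ?Phi (?E hs))"
    by (rule integral_mono) (auto intro: Phi_ge[OF N eta k(1)])
  also have "measure_pmf.expectation ?H (\<lambda>hs. ?Phi (?E hs)) - measure_pmf.expectation ?H S
      = measure_pmf.expectation ?H (\<lambda>hs. ?Phi (?E hs) - S hs)"
    by simp
  also have "\<dots> \<le> \<eta> + real T * (real N / sqrt \<eta>)"
    using Q_bound[of T] by (simp add: S_def)
  finally show ?thesis by simp
qed

end



theorem corollary1:
  fixes N T :: nat and g :: "nat \<Rightarrow> nat \<Rightarrow> real"
  assumes "0 < N" and "0 < T"
    and "\<forall>t<T. \<forall>i<N. -1 \<le> g t i \<and> g t i \<le> 0"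
  shows "expected_regret N T ((real N * real T) powr (2/3)) g \<le> 3 * (real N * real T) powr (2/3)"
proof -
  define x where "x = real N * real T"
  have x: "0 < x" using assms(1,2) by (simp add: x_def)
  define \<eta> where "\<eta> = x powr (2/3)"
  have eta: "0 < \<eta>" using x by (simp add: \<eta>_def)
  have "sqrt \<eta> = x powr (1/3)"
    using x by (simp add: \<eta>_def powr_half_sqrt[symmetric] powr_powr)
  then have "real T * (real N / sqrt \<eta>) = x powr 1 / x powr (1/3)"
    using x by (simp add: x_def mult.commute)
  also have "\<dots> = x powr (1 - 1/3)" by (rule powr_diff[symmetric])
  also have "\<dots> = x powr (2/3)" by simp
  finally have "\<eta> + real T * (real N / sqrt \<eta>) \<le> 3 * x powr (2/3)"
    using x by (simp add: \<eta>_def)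
  moreover have "expected_regret N T \<eta> g \<le> \<eta> + real T * (real N / sqrt \<eta>)"
    by (rule regret_bound[OF assms(1) eta assms(3)])
  ultimately show ?thesis by (simp add: \<eta>_def x_def)
qed


end
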